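(* Fix $0<\alpha'<\alpha<1$ and $a>0$. There exists $b>0$ such that for every integer $s\ge1$, $$\max_{\alpha' s\le k\le \alpha s}\ \mathbb E_k\Big[\exp\Big\{\frac{a\max_{0\le t\le 2s}x(t)}{\sqrt s}\Big\}\Big]\le b.$$
   Context: A Dyck path of length $2s$ is a sequence $x(0),\dots,x(2s)$ of integers with $x(0)=x(2s)=0$, $x(t)\ge0$ and $x(t)-x(t-1)=\pm1$. Step $t$ (from $t-1$ to $t$) is called odd if $t$ is odd. $\mathcal X_{s,k}$ is the set of Dyck paths of length $2s$ having exactly $k$ up steps at odd instants (its cardinality is the Narayana number $\frac1s\binom sk\binom s{k-1}$), and $\mathbb E_k$, $\mathbb P_k$ denote expectation and probability under the uniform distribution on $\mathcal X_{s,k}$. *)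

theory Defs
  imports "HOL-Probability.Probability"
begin

text \<open>A Dyck path of length 2s, represented as a function nat => int which is
  set to 0 beyond time 2s (so that the set of paths is a set of functions).\<close>
definition dyck_path :: "nat \<Rightarrow> (nat \<Rightarrow> int) \<Rightarrow> bool" where
  "dyck_path s x \<longleftrightarrow>
     x 0 = 0 \<and> x (2 * s) = 0 \<and>
     (\<forall>t\<le>2 * s. x t \<ge> 0) \<and>
     (\<forall>t\<in>{1..2 * s}. x t - x (t - 1) = 1 \<or> x t - x (t - 1) = -1) \<and>
     (\<forall>t>2 * s. x t = 0)"

definition odd_ups :: "nat \<Rightarrow> (nat \<Rightarrow> int) \<Rightarrow> nat" where
  "odd_ups s x = card {t\<in>{1..2 * s}. odd t \<and> x t - x (t - 1) = 1}"

definition dyck_X :: "nat \<Rightarrow> nat \<Rightarrow> (nat \<Rightarrow> int) set" where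
  "dyck_X s k = {x. dyck_path s x \<and> odd_ups s x = k}"

definition E_unif :: "nat \<Rightarrow> nat \<Rightarrow> ((nat \<Rightarrow> int) \<Rightarrow> real) \<Rightarrow> real" where
  "E_unif s k f = measure_pmf.expectation (pmf_of_set (dyck_X s k)) f"

end

theory Submission
  imports Defs "HOL-Combinatorics.Multiset_Permutations"
begin

definition Lset :: "int set" where "Lset = {-1,0,1,2}"
definition val :: "int \<Rightarrow> int" where "val l = (if l = 2 then 0 else l)"
definition ps :: "int list \<Rightarrow> nat \<Rightarrow> int" where "ps w t = sum_list (map val (take t w))"

lemma sum_val_count:
  "set w \<subseteq> Lset \<Longrightarrow> sum_list (map val w) = int (count (mset w) 1) - int (count (mset w) (-1))"
  by (induction w) (auto simp: Lset_def val_def)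

lemma length_count:
  "set w \<subseteq> Lset \<Longrightarrow> length w = count (mset w) (-1) + count (mset w) 0 + count (mset w) 1 + count (mset w) 2"
  by (induction w) (auto simp: Lset_def)

lemma count_other: "set w \<subseteq> Lset \<Longrightarrow> x \<notin> Lset \<Longrightarrow> count (mset w) x = 0"
  by (metis count_mset_0_iff subsetD)

lemma ps_0[simp]: "ps w 0 = 0" by (simp add: ps_def)

lemma ps_beyond: "length w \<le> t \<Longrightarrow> ps w t = ps w (length w)"
  by (simp add: ps_def)

lemma ps_Suc: "t < length w \<Longrightarrow> ps w (Suc t) = ps w t + val (w ! t)"
  by (simp add: ps_def take_Suc_conv_app_nth)

lemma val_bound: "l \<in> Lset \<Longrightarrow> \<bar>val l\<bar> \<le> 1"
  by (auto simp: Lset_def val_def)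

lemma ps_step: assumes "set w \<subseteq> Lset" shows "\<bar>ps w (Suc t) - ps w t\<bar> \<le> 1"
proof (cases "t < length w")
  case True
  then have "w ! t \<in> Lset" using assms nth_mem by blast
  then show ?thesis using True ps_Suc val_bound by simp
next
  case False
  then show ?thesis using ps_beyond[of w t] ps_beyond[of w "Suc t"] by simp
qed

lemma discrete_ivt:
  fixes f :: "nat \<Rightarrow> int"
  assumes "f 0 \<le> c" "c \<le> f t" "\<And>i. \<bar>f (Suc i) - f i\<bar> \<le> 1"
  shows "\<exists>i\<le>t. f i = c"
  using assms(2)
proof (induction t)
  case 0 then show ?case using assms(1) by auto
next
  case (Suc t)
  show ?case
  proof (cases "c \<le> f t")
    case True then show ?thesis using Suc.IH by (meson le_SucI)
  next
    case False
    then have "f (Suc t) = c" using Suc.prems assms(3)[of t] by auto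
    then show ?thesis by blast
  qed
qed

lemma ps_hit_up:
  assumes "set w \<subseteq> Lset" "0 \<le> c" "c \<le> ps w t" shows "\<exists>i\<le>t. ps w i = c"
  using discrete_ivt[of "ps w" c t] assms ps_step by auto

lemma ps_hit_down:
  assumes "set w \<subseteq> Lset" "c \<le> 0" "ps w t \<le> c" shows "\<exists>i\<le>t. ps w i = c"
proof -
  have "\<exists>i\<le>t. - ps w i = - c"
    using discrete_ivt[of "\<lambda>i. - ps w i" "-c" t] assms ps_step[OF assms(1)]
    by (auto simp: abs_minus_commute)
  then show ?thesis by auto
qed

lemma mset_rotate: "mset (rotate n xs) = mset xs"
  by (metis append_take_drop_id mset_append rotate_drop_take union_commute)

lemma ps_rot1:
  assumes "r \<le> length w" "t \<le> length w - r"
  shows "ps (drop r w @ take r w) t = ps w (r + t) - ps w r"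
proof -
  have "t - (length w - r) = 0" using assms by simp
  then have eq1: "take t (drop r w @ take r w) = take t (drop r w)" using assms by simp
  show ?thesis unfolding ps_def eq1 take_add by simp
qed

lemma ps_rot2:
  assumes "r \<le> length w" "length w - r \<le> t" "t \<le> length w"
  shows "ps (drop r w @ take r w) t = ps w (length w) - ps w r + ps w (t - (length w - r))"
proof -
  have "take t (drop r w @ take r w) = drop r w @ take (t - (length w - r)) w"
    using assms by (simp add: min_def)
  moreover have "sum_list (map val (drop r w)) = ps w (length w) - ps w r"
    unfolding ps_def by (metis add_diff_cancel_left' append_take_drop_id map_append sum_list_append take_all order_refl)
  ultimately show ?thesis by (simp add: ps_def)
qed

definition Wd :: "nat \<Rightarrow> nat \<Rightarrow> int list set" where
  "Wd s k = {w. set w \<subseteq> Lset \<and> length w = s \<and> count (mset w) (-1) = count (mset w) 1 + 1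
     \<and> count (mset w) 1 + count (mset w) 2 + 1 = k}"
definition good :: "int list \<Rightarrow> bool" where "good w = (\<forall>t<length w. ps w t \<ge> 0)"
definition Gd :: "nat \<Rightarrow> nat \<Rightarrow> int list set" where "Gd s k = {w\<in>Wd s k. good w}"
definition badW :: "int \<Rightarrow> int list \<Rightarrow> bool" where
  "badW h v = ((\<exists>t. ps v t \<ge> h) \<or> (\<exists>t. ps v t \<le> -h))"

lemma Wd_ps: assumes "w \<in> Wd s k" shows "ps w s = -1"
proof -
  have "ps w s = sum_list (map val w)" using assms by (simp add: Wd_def ps_def)
  also have "\<dots> = -1" using assms sum_val_count[of w] by (simp add: Wd_def)
  finally show ?thesis .
qed

lemma rotate_Wd: "w \<in> Wd s k \<Longrightarrow> rotate r w \<in> Wd s k"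
  by (simp add: Wd_def mset_rotate)

lemma finite_Wd: "finite (Wd s k)"
proof -
  have "Wd s k \<subseteq> {w. set w \<subseteq> Lset \<and> length w = s}" by (auto simp: Wd_def)
  moreover have "finite {w. set w \<subseteq> Lset \<and> length w = s}"
    by (rule finite_lists_length_eq) (simp add: Lset_def)
  ultimately show ?thesis by (rule finite_subset)
qed

lemma rot_eq: "r < length w \<Longrightarrow> rotate r w = drop r w @ take r w"
  by (simp add: rotate_drop_take)

lemma not_good_rot:
  assumes w: "w \<in> Wd s k" "good w" and d: "0 < d" "d < s"
  shows "\<not> good (rotate d w)"
proof
  assume g: "good (rotate d w)"
  have len: "length w = s" using w by (simp add: Wd_def)
  have "ps (rotate d w) (s - d) = ps w (d + (s - d)) - ps w d"
    using d len by (simp add: rot_eq ps_rot1)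
  also have "\<dots> = -1 - ps w d" using d Wd_ps[OF w(1)] by simp
  moreover have "ps w d \<ge> 0" using w(2) d len by (simp add: good_def)
  ultimately have "ps (rotate d w) (s - d) < 0" by linarith
  moreover have "s - d < length (rotate d w)" using d len by simp
  ultimately show False using g by (force simp: good_def)
qed

lemma rotate_back: "length w = s \<Longrightarrow> r \<le> s \<Longrightarrow> rotate (s - r) (rotate r w) = w"
  by (simp add: rotate_rotate)

lemma rot_inj: "inj_on (\<lambda>(w,r). rotate r w) (Gd s k \<times> {0..<s})"
proof (rule inj_onI, clarsimp)
  fix w r w' r'
  assume A: "w \<in> Gd s k" "r < s" "w' \<in> Gd s k" "r' < s" and eq: "rotate r w = rotate r' w'"
  have len: "length w = s" "length w' = s" using A by (auto simp: Gd_def Wd_def)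
  have "w = rotate (s - r) (rotate r w)" using rotate_back[OF len(1)] A by simp
  also have "\<dots> = rotate (s - r + r') w'" by (simp add: eq rotate_rotate)
  also have "\<dots> = rotate ((s - r + r') mod s) w'" using len by (metis rotate_conv_mod)
  finally have ww: "w = rotate ((s - r + r') mod s) w'" .
  have "(s - r + r') mod s = 0"
  proof (rule ccontr)
    assume "(s - r + r') mod s \<noteq> 0"
    then have "\<not> good (rotate ((s - r + r') mod s) w')"
      using not_good_rot[of w' s k "(s - r + r') mod s"] A by (simp add: Gd_def)
    then show False using ww A by (simp add: Gd_def)
  qed
  then have "w = w'" using ww by simp
  moreover have "r = r'"
  proof -
    have "s - r + r' < 2 * s" "0 < s - r + r'" using A by auto
    moreover obtain q where q: "s - r + r' = s * q" using \<open>(s - r + r') mod s = 0\<close> by auto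
    ultimately have "q = 1"
    proof -
      have "q \<noteq> 0" using q \<open>0 < s - r + r'\<close> by auto
      moreover have "\<not> q \<ge> 2"
      proof
        assume "q \<ge> 2" then have "s * q \<ge> s * 2" by simp
        then show False using q \<open>s - r + r' < 2 * s\<close> by linarith
      qed
      ultimately show ?thesis by linarith
    qed
    then have "s - r + r' = s" using q by simp
    then show ?thesis using A by simp
  qed
  ultimately show "w = w' \<and> r = r'" by simp
qed

lemma rot_eq': "r \<le> length w \<Longrightarrow> rotate r w = drop r w @ take r w"
  by (cases "r = length w") (auto simp: rot_eq)

lemma rot_surj:
  assumes s: "s \<ge> 1" and w: "w \<in> Wd s k"
  shows "\<exists>w0 r. w0 \<in> Gd s k \<and> r < s \<and> w = rotate r w0"
proof -
  have len: "length w = s" using w by (simp add: Wd_def)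
  define m where "m = Min (ps w ` {1..s})"
  have fin: "finite (ps w ` {1..s})" "ps w ` {1..s} \<noteq> {}" using s by auto
  have "m \<in> ps w ` {1..s}" using Min_in[OF fin] m_def by simp
  then have ex: "\<exists>p. p \<in> {1..s} \<and> ps w p = m" by auto
  define p where "p = (LEAST p. p \<in> {1..s} \<and> ps w p = m)"
  have P: "p \<in> {1..s} \<and> ps w p = m" using LeastI_ex[OF ex] p_def by simp
  have minle: "\<And>q. q \<in> {1..s} \<Longrightarrow> m \<le> ps w q" using fin m_def by simp
  have strict: "\<And>q. q \<in> {1..s} \<Longrightarrow> q < p \<Longrightarrow> m + 1 \<le> ps w q"
  proof -
    fix q assume q: "q \<in> {1..s}" "q < p"
    have "ps w q \<noteq> m"
    proof
      assume "ps w q = m" then have "p \<le> q" using q(1) p_def by (simp add: Least_le)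
      then show False using q by simp
    qed
    then show "m + 1 \<le> ps w q" using minle[OF q(1)] by simp
  qed
  define w0 where "w0 = rotate p w"
  have w0eq: "w0 = drop p w @ take p w" using P len by (simp add: w0_def rot_eq')
  have "good w0"
    unfolding good_def
  proof (intro allI impI)
    fix t assume t: "t < length w0"
    then have t': "t < s" using len by (simp add: w0_def)
    show "0 \<le> ps w0 t"
    proof (cases "t \<le> s - p")
      case True
      have "ps w0 t = ps w (p + t) - ps w p" using True P len by (simp add: w0eq ps_rot1)
      moreover have "p + t \<in> {1..s}" using True P by auto
      ultimately show ?thesis using minle P by fastforce
    next
      case False
      have "ps w0 t = ps w s - ps w p + ps w (t - (s - p))" using False P len t' by (simp add: w0eq ps_rot2)
      moreover have "t - (s - p) \<in> {1..s}" "t - (s - p) < p" using False P t' by auto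
      ultimately show ?thesis using strict P Wd_ps[OF w] by fastforce
    qed
  qed
  moreover have "w0 \<in> Wd s k" using w rotate_Wd w0_def by simp
  moreover have "w = rotate (s - p) w0" using rotate_back[OF len] P w0_def by simp
  moreover have "s - p < s" using P by auto
  ultimately show ?thesis by (auto simp: Gd_def)
qed

lemma rot_bad:
  assumes w: "w \<in> Gd s k" and r: "r < s" and t0: "t0 < s" "ps w t0 \<ge> 2 * h"
  shows "badW h (rotate r w)"
proof -
  have len: "length w = s" and wW: "w \<in> Wd s k" using w by (auto simp: Gd_def Wd_def)
  define v where "v = rotate r w"
  have veq: "v = drop r w @ take r w" using r len by (simp add: v_def rot_eq)
  have B: "ps v (s - r) = -1 - ps w r" using r len Wd_ps[OF wW] by (simp add: veq ps_rot1)
  have "\<exists>A. (\<exists>t. ps v t = A) \<and> A - ps v (s - r) \<ge> 2 * h"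
  proof (cases "r \<le> t0")
    case True
    have "ps v (t0 - r) = ps w t0 - ps w r" using True r len t0 by (simp add: veq ps_rot1)
    then show ?thesis using B t0 by (intro exI[of _ "ps v (t0 - r)"]) auto
  next
    case False
    have "ps v (s - r + t0) = ps w s - ps w r + ps w t0" using False r len t0 by (simp add: veq ps_rot2)
    then show ?thesis using B t0 Wd_ps[OF wW] by (intro exI[of _ "ps v (s - r + t0)"]) auto
  qed
  then obtain t where "ps v t - ps v (s - r) \<ge> 2 * h" by auto
  then have "ps v t \<ge> h \<or> ps v (s - r) \<le> - h" by linarith
  then show ?thesis unfolding badW_def v_def by blast
qed

definition rf :: "int \<Rightarrow> int" where "rf l = (if l = 1 then -1 else if l = -1 then 1 else l)"
definition tau :: "int \<Rightarrow> int list \<Rightarrow> nat" where "tau c v = (LEAST t. ps v t = c)"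
definition reflw :: "int \<Rightarrow> int list \<Rightarrow> int list" where
  "reflw c v = take (tau c v) v @ map rf (drop (tau c v) v)"

lemma count_map_rf:
  "count (image_mset rf U) 1 = count U (-1)"
  "count (image_mset rf U) (-1) = count U 1"
  "x \<noteq> 1 \<Longrightarrow> x \<noteq> -1 \<Longrightarrow> count (image_mset rf U) x = count U x"
  by (induction U) (auto simp: rf_def)

lemma rf_comp[simp]: "rf \<circ> rf = id" by (auto simp: rf_def)

lemma rf_rf[simp]: "rf (rf l) = l" by (simp add: rf_def)

lemma map_rf_rf[simp]: "map rf (map rf u) = u" by (induction u) auto

lemma tau_props:
  assumes "ps v t = c" shows "ps v (tau c v) = c" "tau c v \<le> length v"
proof -
  show "ps v (tau c v) = c" unfolding tau_def using assms by (rule LeastI)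
  show "tau c v \<le> length v"
  proof (cases "t \<le> length v")
    case True
    have "tau c v \<le> t" unfolding tau_def using assms by (rule Least_le)
    then show ?thesis using True by simp
  next
    case False
    then have "ps v (length v) = c" using assms ps_beyond[of v t] by simp
    then show ?thesis unfolding tau_def by (rule Least_le)
  qed
qed

lemma refl_counts:
  assumes L: "set v \<subseteq> Lset" and h: "ps v t = c"
  shows "int (count (mset (reflw c v)) 1) = int (count (mset v) (-1)) + c"
        "int (count (mset (reflw c v)) (-1)) = int (count (mset v) 1) - c"
        "x \<noteq> 1 \<Longrightarrow> x \<noteq> -1 \<Longrightarrow> count (mset (reflw c v)) x = count (mset v) x"
proof -
  let ?P = "take (tau c v) v" and ?S = "drop (tau c v) v"
  have mv: "mset v = mset ?P + mset ?S" by (metis append_take_drop_id mset_append)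
  have "set ?P \<subseteq> Lset" using L by (meson order_trans set_take_subset)
  moreover have "ps v (tau c v) = sum_list (map val ?P)" by (simp add: ps_def)
  ultimately have c: "c = int (count (mset ?P) 1) - int (count (mset ?P) (-1))"
    using tau_props(1)[OF h] sum_val_count by simp
  have mr: "mset (reflw c v) = mset ?P + mset (map rf ?S)" by (simp add: reflw_def)
  show "int (count (mset (reflw c v)) 1) = int (count (mset v) (-1)) + c"
    using c by (simp add: mr mv count_map_rf)
  show "int (count (mset (reflw c v)) (-1)) = int (count (mset v) 1) - c"
    using c by (simp add: mr mv count_map_rf)
  show "x \<noteq> 1 \<Longrightarrow> x \<noteq> -1 \<Longrightarrow> count (mset (reflw c v)) x = count (mset v) x"
    by (simp add: mr mv count_map_rf)
qed

lemma refl_refl: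
  assumes h: "ps v t = c" shows "reflw c (reflw c v) = v"
proof -
  define T where "T = tau c v"
  have T: "ps v T = c" "T \<le> length v" using tau_props[OF h] T_def by auto
  have tk: "take T (reflw c v) = take T v" using T by (simp add: reflw_def T_def)
  have dr: "drop T (reflw c v) = map rf (drop T v)" using T by (simp add: reflw_def T_def)
  have pseq: "\<And>t. t \<le> T \<Longrightarrow> ps (reflw c v) t = ps v t"
  proof -
    fix t assume "t \<le> T"
    then have "take t (reflw c v) = take t v" using tk
      by (metis min.absorb1 take_take)
    then show "ps (reflw c v) t = ps v t" by (simp add: ps_def)
  qed
  have "tau c (reflw c v) = T"
    unfolding tau_def
  proof (rule Least_equality)
    show "ps (reflw c v) T = c" using pseq T by simp
    fix y assume y: "ps (reflw c v) y = c"
    show "T \<le> y"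
    proof (rule ccontr)
      assume "\<not> T \<le> y"
      then have "ps v y = c" using y pseq by simp
      then have "T \<le> y" unfolding T_def tau_def by (rule Least_le)
      then show False using \<open>\<not> T \<le> y\<close> by simp
    qed
  qed
  then show ?thesis unfolding reflw_def[of c "reflw c v"] using tk dr by simp
qed

lemma refl_inj: "inj_on (reflw c) {v. \<exists>t. ps v t = c}"
proof (rule inj_onI)
  fix x y assume x: "x \<in> {v. \<exists>t. ps v t = c}" and y: "y \<in> {v. \<exists>t. ps v t = c}"
    and e: "reflw c x = reflw c y"
  obtain t1 where "ps x t1 = c" using x by auto
  obtain t2 where "ps y t2 = c" using y by auto
  have "x = reflw c (reflw c x)" using refl_refl[OF \<open>ps x t1 = c\<close>] by simp
  also have "\<dots> = reflw c (reflw c y)" using e by simp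
  also have "\<dots> = y" using refl_refl[OF \<open>ps y t2 = c\<close>] by simp
  finally show "x = y" .
qed

definition shiftm :: "nat \<Rightarrow> int \<Rightarrow> int \<Rightarrow> int multiset \<Rightarrow> int multiset" where
  "shiftm g a b M = M - replicate_mset g b + replicate_mset g a"

lemma count_shiftm:
  assumes "a \<noteq> b"
  shows "count (shiftm g a b M) x = (if x = a then count M a + g else if x = b then count M b - g else count M x)"
  using assms by (auto simp: shiftm_def)

lemma one_minus_le_exp: "1 - (x::real) \<le> exp (- x)"
  using exp_ge_add_one_self[of "-x"] by simp

lemma shift_card:
  assumes ab: "a \<noteq> b" and g: "g \<le> count M b" and pq: "count M b \<le> count M a + 1"
    and n: "size M \<le> n" "n > 0"
  shows "real (card (permutations_of_multiset (shiftm g a b M)))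
          \<le> exp (- (real g * (real g - 1)) / real n) * real (card (permutations_of_multiset M))"
  using g
proof (induction g)
  case 0
  have "shiftm 0 a b M = M" by (simp add: shiftm_def)
  then show ?case by simp
next
  case (Suc g)
  define N where "N = shiftm g a b M"
  have cN: "count N a = count M a + g" "count N b = count M b - g"
    using ab by (simp_all add: N_def count_shiftm)
  have "count N b > 0" using cN Suc.prems by simp
  then have bN: "b \<in># N" by (simp only: count_greater_zero_iff)
  define A0 where "A0 = N - {#b#}"
  have NA: "N = A0 + {#b#}" using bN by (simp add: A0_def)
  have SA: "shiftm (Suc g) a b M = A0 + {#a#}"
  proof (rule multiset_eqI)
    fix x show "count (shiftm (Suc g) a b M) x = count (A0 + {#a#}) x"
      using ab Suc.prems cN by (auto simp: count_shiftm A0_def N_def)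
  qed
  have cA: "count A0 a = count M a + g" "count A0 b + 1 = count M b - g"
    using ab cN bN Suc.prems by (auto simp: A0_def)
  have e1: "card (permutations_of_multiset N) * (count A0 b + 1) = (size A0 + 1) * card (permutations_of_multiset A0)"
    using card_permutations_of_multiset_insert_aux[of A0 b] NA by simp
  have e2: "card (permutations_of_multiset (shiftm (Suc g) a b M)) * (count A0 a + 1) = (size A0 + 1) * card (permutations_of_multiset A0)"
    using card_permutations_of_multiset_insert_aux[of A0 a] SA by simp
  define C' where "C' = real (card (permutations_of_multiset (shiftm (Suc g) a b M)))"
  define CN where "CN = real (card (permutations_of_multiset N))"
  define p where "p = real (count M a)"
  define q where "q = real (count M b)"
  have key: "C' * (p + g + 1) = CN * (q - g)"
  proof -
    have "real (card (permutations_of_multiset (shiftm (Suc g) a b M)) * (count A0 a + 1))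
        = real (card (permutations_of_multiset N) * (count A0 b + 1))" using e1 e2 by simp
    then have E: "C' * real (count A0 a + 1) = CN * real (count A0 b + 1)"
      unfolding C'_def CN_def by (simp only: of_nat_mult)
    have H1: "real (count A0 b + 1) = q - g" unfolding q_def using cA(2) Suc.prems
      by (simp add: of_nat_diff)
    have H2: "real (count A0 a + 1) = p + g + 1" unfolding p_def using cA(1) by simp
    show ?thesis using E unfolding H1 H2 .
  qed
  have qp: "q \<le> p + 1" "q \<ge> g + 1" using pq Suc.prems unfolding p_def q_def by auto
  have pn: "p + g + 1 \<le> n"
  proof -
    have "count M a + count M b \<le> size M"
    proof -
      have "replicate_mset (count M a) a + replicate_mset (count M b) b \<subseteq># M"
        using ab by (auto simp: subseteq_mset_def)
      then have "size (replicate_mset (count M a) a + replicate_mset (count M b) b) \<le> size M"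
        by (rule size_mset_mono)
      then show ?thesis by simp
    qed
    then show ?thesis using n Suc.prems unfolding p_def q_def by linarith
  qed
  have ratio: "(q - g) / (p + g + 1) \<le> exp (- (2 * g) / n)"
  proof -
    have pos: "p + g + 1 > 0" using p_def by (simp add: add_pos_nonneg)
    have "(q - g) / (p + g + 1) \<le> (p + 1 - g) / (p + g + 1)"
      using qp pos by (simp add: divide_right_mono)
    also have "\<dots> = 1 - 2 * g / (p + g + 1)" using pos by (simp add: field_simps)
    also have "\<dots> \<le> 1 - 2 * g / n"
      using pn pos by (simp add: frac_le)
    also have "\<dots> \<le> exp (- (2 * g) / n)" using one_minus_le_exp[of "2 * g / n"] by simp
    finally show ?thesis .
  qed
  have "C' = CN * ((q - g) / (p + g + 1))" using key p_def
    by (simp add: field_simps add_pos_nonneg)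
  also have "\<dots> \<le> CN * exp (- (2 * g) / n)"
    by (rule mult_left_mono[OF ratio]) (simp add: CN_def)
  also have "\<dots> \<le> (exp (- (real g * (real g - 1)) / real n) * real (card (permutations_of_multiset M))) * exp (- (2 * g) / n)"
    using Suc.IH Suc.prems CN_def N_def by (simp add: mult_right_mono)
  also have "\<dots> = exp (- (real (Suc g) * (real (Suc g) - 1)) / real n) * real (card (permutations_of_multiset M))"
  proof -
    have "- (real g * (real g - 1)) / real n + - (2 * g) / n = - (real (Suc g) * (real (Suc g) - 1)) / real n"
      using n(2) by (simp add: field_simps)
    then show ?thesis by (simp add: mult_ac flip: exp_add)
  qed
  finally show ?case unfolding C'_def .
qed

lemma card_partition_fun:
  assumes "finite A" "finite J" "f ` A \<subseteq> J"
  shows "card A = (\<Sum>j\<in>J. card {x\<in>A. f x = j})"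
  using sum.group[OF assms, of "\<lambda>_. 1::nat"] by simp

lemma Wd_mset_eq:
  assumes v: "v \<in> Wd s k" and v0: "v0 \<in> Wd s k" and c: "count (mset v) 1 = count (mset v0) 1"
  shows "mset v = mset v0"
proof (rule multiset_eqI)
  fix x
  have L: "set v \<subseteq> Lset" "set v0 \<subseteq> Lset" using v v0 by (auto simp: Wd_def)
  have c1: "count (mset v) (-1) = count (mset v0) (-1)" "count (mset v) 2 = count (mset v0) 2"
    using v v0 c by (auto simp: Wd_def)
  have c0: "count (mset v) 0 = count (mset v0) 0"
    using length_count[OF L(1)] length_count[OF L(2)] v v0 c c1 by (simp add: Wd_def)
  show "count (mset v) x = count (mset v0) x"
  proof (cases "x \<in> Lset")
    case True then show ?thesis using c c1 c0 by (auto simp: Lset_def)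
  next
    case False then show ?thesis using count_other[OF L(1) False] count_other[OF L(2) False] by (simp only:)
  qed
qed

lemma Sj_perm:
  assumes v0: "v0 \<in> Wd s k"
  shows "{v \<in> Wd s k. count (mset v) 1 = count (mset v0) 1} = permutations_of_multiset (mset v0)"
proof
  show "{v \<in> Wd s k. count (mset v) 1 = count (mset v0) 1} \<subseteq> permutations_of_multiset (mset v0)"
    using Wd_mset_eq[OF _ v0] by (auto intro: permutations_of_multisetI)
  show "permutations_of_multiset (mset v0) \<subseteq> {v \<in> Wd s k. count (mset v) 1 = count (mset v0) 1}"
  proof
    fix v assume "v \<in> permutations_of_multiset (mset v0)"
    then have m: "mset v = mset v0" by (rule permutations_of_multisetD)
    then have "set v = set v0" "length v = length v0" by (metis set_mset_mset, metis size_mset)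
    then show "v \<in> {v \<in> Wd s k. count (mset v) 1 = count (mset v0) 1}" using v0 m by (simp add: Wd_def)
  qed
qed

lemma hit_generic:
  assumes "\<And>v t. v \<in> permutations_of_multiset M \<Longrightarrow> ps v t = c \<Longrightarrow> mset (reflw c v) = M'"
  shows "card {v \<in> permutations_of_multiset M. \<exists>t. ps v t = c} \<le> card (permutations_of_multiset M')"
proof (rule card_inj_on_le)
  show "inj_on (reflw c) {v \<in> permutations_of_multiset M. \<exists>t. ps v t = c}"
    by (rule inj_on_subset[OF refl_inj]) auto
  show "reflw c ` {v \<in> permutations_of_multiset M. \<exists>t. ps v t = c} \<subseteq> permutations_of_multiset M'"
    using assms by (auto intro: permutations_of_multisetI)
qed simp

lemma hit_max:
  assumes v0: "v0 \<in> Wd s k" and s: "s \<ge> 1"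
  shows "real (card {v \<in> permutations_of_multiset (mset v0). \<exists>t. ps v t = int h})
     \<le> exp (- (real (h+1) * (real (h+1) - 1)) / real s) * real (card (permutations_of_multiset (mset v0)))"
proof (cases "{v \<in> permutations_of_multiset (mset v0). \<exists>t. ps v t = int h} = {}")
  case True show ?thesis unfolding True by simp
next
  case False
  define M where "M = mset v0"
  define j where "j = count M 1"
  have cM: "count M (-1) = j + 1" "size M = s" using v0 by (auto simp: Wd_def M_def j_def)
  have L0: "set v0 \<subseteq> Lset" using v0 by (simp add: Wd_def)
  have Lv: "\<And>v. v \<in> permutations_of_multiset M \<Longrightarrow> set v \<subseteq> Lset"
    using L0 by (metis M_def permutations_of_multisetD set_mset_mset)
  obtain v1 t1 where v1: "v1 \<in> permutations_of_multiset M" "ps v1 t1 = int h" using False M_def by auto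
  have "int (count (mset (reflw (int h) v1)) (-1)) = int j - int h"
    using refl_counts(2)[OF Lv[OF v1(1)] v1(2)] v1(1) by (simp add: permutations_of_multisetD j_def)
  then have hj: "h \<le> j" by linarith
  have "card {v \<in> permutations_of_multiset M. \<exists>t. ps v t = int h} \<le> card (permutations_of_multiset (shiftm (h+1) 1 (-1) M))"
  proof (rule hit_generic)
    fix v t assume v: "v \<in> permutations_of_multiset M" "ps v t = int h"
    have mv: "mset v = M" using v(1) by (rule permutations_of_multisetD)
    note rc = refl_counts[OF Lv[OF v(1)] v(2), unfolded mv]
    show "mset (reflw (int h) v) = shiftm (h + 1) 1 (- 1) M"
    proof (rule multiset_eqI)
      fix x show "count (mset (reflw (int h) v)) x = count (shiftm (h + 1) 1 (- 1) M) x"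
        using rc cM hj unfolding j_def by (auto simp: count_shiftm)
    qed
  qed
  also have "real (card (permutations_of_multiset (shiftm (h+1) 1 (-1) M)))
     \<le> exp (- (real (h+1) * (real (h+1) - 1)) / real s) * real (card (permutations_of_multiset M))"
    by (rule shift_card) (use cM hj s in \<open>auto simp: j_def\<close>)
  finally show ?thesis unfolding M_def by simp
qed

lemma hit_min:
  assumes v0: "v0 \<in> Wd s k" and s: "s \<ge> 1" and h: "h \<ge> 1"
  shows "real (card {v \<in> permutations_of_multiset (mset v0). \<exists>t. ps v t = - int h})
     \<le> exp (- (real (h-1) * (real (h-1) - 1)) / real s) * real (card (permutations_of_multiset (mset v0)))"
proof (cases "{v \<in> permutations_of_multiset (mset v0). \<exists>t. ps v t = - int h} = {}")
  case True show ?thesis unfolding True by simp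
next
  case False
  define M where "M = mset v0"
  define j where "j = count M 1"
  have cM: "count M (-1) = j + 1" "size M = s" using v0 by (auto simp: Wd_def M_def j_def)
  have L0: "set v0 \<subseteq> Lset" using v0 by (simp add: Wd_def)
  have Lv: "\<And>v. v \<in> permutations_of_multiset M \<Longrightarrow> set v \<subseteq> Lset"
    using L0 by (metis M_def permutations_of_multisetD set_mset_mset)
  obtain v1 t1 where v1: "v1 \<in> permutations_of_multiset M" "ps v1 t1 = - int h" using False M_def by auto
  have "int (count (mset (reflw (- int h) v1)) 1) = int j + 1 - int h"
    using refl_counts(1)[OF Lv[OF v1(1)] v1(2)] v1(1) cM by (simp add: permutations_of_multisetD j_def)
  then have hj: "h - 1 \<le> j" by linarith
  have "card {v \<in> permutations_of_multiset M. \<exists>t. ps v t = - int h} \<le> card (permutations_of_multiset (shiftm (h-1) (-1) 1 M))"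
  proof (rule hit_generic)
    fix v t assume v: "v \<in> permutations_of_multiset M" "ps v t = - int h"
    have mv: "mset v = M" using v(1) by (rule permutations_of_multisetD)
    note rc = refl_counts[OF Lv[OF v(1)] v(2), unfolded mv]
    show "mset (reflw (- int h) v) = shiftm (h - 1) (-1) 1 M"
    proof (rule multiset_eqI)
      fix x show "count (mset (reflw (- int h) v)) x = count (shiftm (h - 1) (-1) 1 M) x"
        using rc cM hj h unfolding j_def by (auto simp: count_shiftm of_nat_diff)
    qed
  qed
  also have "real (card (permutations_of_multiset (shiftm (h-1) (-1) 1 M)))
     \<le> exp (- (real (h-1) * (real (h-1) - 1)) / real s) * real (card (permutations_of_multiset M))"
    by (rule shift_card) (use cM hj s in \<open>auto simp: j_def\<close>)
  finally show ?thesis unfolding M_def by simp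
qed

lemma bad_j:
  assumes s: "s \<ge> 1" and h: "h \<ge> 1"
  shows "real (card {v \<in> Wd s k. badW (int h) v \<and> count (mset v) 1 = j})
     \<le> 2 * exp (- (real (h-1) * (real (h-1) - 1)) / real s) * real (card {v \<in> Wd s k. count (mset v) 1 = j})"
proof (cases "{v \<in> Wd s k. count (mset v) 1 = j} = {}")
  case True
  then have E: "{v \<in> Wd s k. badW (int h) v \<and> count (mset v) 1 = j} = {}" by auto
  show ?thesis unfolding E True by simp
next
  case False
  then obtain v0 where v0: "v0 \<in> Wd s k" "count (mset v0) 1 = j" by auto
  define e where "e = exp (- (real (h-1) * (real (h-1) - 1)) / real s)"
  have Sj: "{v \<in> Wd s k. count (mset v) 1 = j} = permutations_of_multiset (mset v0)"
    using Sj_perm[OF v0(1)] v0(2) by simp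
  define A where "A = {v \<in> permutations_of_multiset (mset v0). \<exists>t. ps v t = int h}"
  define B where "B = {v \<in> permutations_of_multiset (mset v0). \<exists>t. ps v t = - int h}"
  have sub: "{v \<in> Wd s k. badW (int h) v \<and> count (mset v) 1 = j} \<subseteq> A \<union> B"
  proof
    fix v assume v: "v \<in> {v \<in> Wd s k. badW (int h) v \<and> count (mset v) 1 = j}"
    then have vp: "v \<in> permutations_of_multiset (mset v0)" using Sj by blast
    have L: "set v \<subseteq> Lset" using v by (simp add: Wd_def)
    have "badW (int h) v" using v by simp
    then show "v \<in> A \<union> B"
    proof (unfold badW_def, elim disjE exE)
      fix t assume "int h \<le> ps v t"
      then obtain i where "ps v i = int h" using ps_hit_up[OF L, of "int h" t] by auto
      then show ?thesis using vp A_def by auto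
    next
      fix t assume "ps v t \<le> - int h"
      then obtain i where "ps v i = - int h" using ps_hit_down[OF L, of "- int h" t] by auto
      then show ?thesis using vp B_def by auto
    qed
  qed
  have "card {v \<in> Wd s k. badW (int h) v \<and> count (mset v) 1 = j} \<le> card (A \<union> B)"
    by (rule card_mono[OF _ sub]) (simp add: A_def B_def)
  also have "\<dots> \<le> card A + card B" by (rule card_Un_le)
  finally have c1: "real (card {v \<in> Wd s k. badW (int h) v \<and> count (mset v) 1 = j}) \<le> real (card A) + real (card B)"
    by linarith
  have "exp (- (real (h+1) * (real (h+1) - 1)) / real s) \<le> e"
  proof -
    have "real (h-1) * (real (h-1) - 1) \<le> real (h+1) * (real (h+1) - 1)"
      using h by (simp add: of_nat_diff algebra_simps)
    then have "- (real (h+1) * (real (h+1) - 1)) / real s \<le> - (real (h-1) * (real (h-1) - 1)) / real s"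
      using s by (simp add: divide_right_mono)
    then show ?thesis unfolding e_def by simp
  qed
  then have "real (card A) \<le> e * real (card (permutations_of_multiset (mset v0)))"
    using hit_max[OF v0(1) s, of h] unfolding A_def
    by (meson mult_right_mono of_nat_0_le_iff order_trans)
  moreover have "real (card B) \<le> e * real (card (permutations_of_multiset (mset v0)))"
    using hit_min[OF v0(1) s h] unfolding B_def e_def by simp
  ultimately show ?thesis using c1 Sj unfolding e_def by simp
qed

lemma count_le_s: "v \<in> Wd s k \<Longrightarrow> count (mset v) 1 \<le> s"
  using length_count[of v] by (auto simp: Wd_def)

lemma bad_Wd:
  assumes s: "s \<ge> 1" and h: "h \<ge> 1"
  shows "real (card {v \<in> Wd s k. badW (int h) v})
     \<le> 2 * exp (- (real (h-1) * (real (h-1) - 1)) / real s) * real (card (Wd s k))"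
proof -
  define e where "e = 2 * exp (- (real (h-1) * (real (h-1) - 1)) / real s)"
  have f1: "finite {v \<in> Wd s k. badW (int h) v}" using finite_Wd by simp
  have "card {v \<in> Wd s k. badW (int h) v} = (\<Sum>j\<in>{0..s}. card {x \<in> {v \<in> Wd s k. badW (int h) v}. count (mset x) 1 = j})"
    by (rule card_partition_fun) (use f1 count_le_s in auto)
  also have "\<dots> = (\<Sum>j\<in>{0..s}. card {v \<in> Wd s k. badW (int h) v \<and> count (mset v) 1 = j})"
    by (intro sum.cong) (auto intro: arg_cong[where f=card])
  finally have "real (card {v \<in> Wd s k. badW (int h) v}) = (\<Sum>j\<in>{0..s}. real (card {v \<in> Wd s k. badW (int h) v \<and> count (mset v) 1 = j}))"
    by simp
  also have "\<dots> \<le> (\<Sum>j\<in>{0..s}. e * real (card {v \<in> Wd s k. count (mset v) 1 = j}))"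
    by (intro sum_mono) (use bad_j[OF s h] e_def in auto)
  also have "\<dots> = e * real (\<Sum>j\<in>{0..s}. card {v \<in> Wd s k. count (mset v) 1 = j})"
    by (simp add: sum_distrib_left)
  also have "(\<Sum>j\<in>{0..s}. card {v \<in> Wd s k. count (mset v) 1 = j}) = card (Wd s k)"
    by (rule card_partition_fun[symmetric]) (use finite_Wd count_le_s in auto)
  finally show ?thesis unfolding e_def .
qed

lemma finite_Gd: "finite (Gd s k)"
  using finite_Wd by (simp add: Gd_def)

lemma bad_Gd:
  assumes s: "s \<ge> 1" and h: "h \<ge> 1"
  shows "real (card {w \<in> Gd s k. \<exists>t<s. ps w t \<ge> 2 * int h})
     \<le> 2 * exp (- (real (h-1) * (real (h-1) - 1)) / real s) * real (card (Gd s k))"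
proof -
  define e where "e = 2 * exp (- (real (h-1) * (real (h-1) - 1)) / real s)"
  define BG where "BG = {w \<in> Gd s k. \<exists>t<s. ps w t \<ge> 2 * int h}"
  have "card (BG \<times> {0..<s}) \<le> card {v \<in> Wd s k. badW (int h) v}"
  proof (rule card_inj_on_le)
    show "inj_on (\<lambda>(w,r). rotate r w) (BG \<times> {0..<s})"
      by (rule inj_on_subset[OF rot_inj]) (auto simp: BG_def)
    show "(\<lambda>(w,r). rotate r w) ` (BG \<times> {0..<s}) \<subseteq> {v \<in> Wd s k. badW (int h) v}"
    proof clarsimp
      fix w r t assume "w \<in> BG" "r < s" 
      then show "rotate r w \<in> Wd s k \<and> badW (int h) (rotate r w)"
        using rot_bad[of w s k r] rotate_Wd by (auto simp: BG_def Gd_def)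
    qed
    show "finite {v \<in> Wd s k. badW (int h) v}" using finite_Wd by simp
  qed
  then have "card BG * s \<le> card {v \<in> Wd s k. badW (int h) v}"
    by (simp add: card_cartesian_product)
  then have c1: "real s * real (card BG) \<le> real (card {v \<in> Wd s k. badW (int h) v})"
    by (metis mult.commute of_nat_le_iff of_nat_mult)
  have "card (Wd s k) \<le> card ((\<lambda>(w,r). rotate r w) ` (Gd s k \<times> {0..<s}))"
  proof (rule card_mono)
    show "finite ((\<lambda>(w,r). rotate r w) ` (Gd s k \<times> {0..<s}))" using finite_Gd by simp
    show "Wd s k \<subseteq> (\<lambda>(w,r). rotate r w) ` (Gd s k \<times> {0..<s})"
    proof
      fix w assume "w \<in> Wd s k"
      then obtain w0 r where "w0 \<in> Gd s k" "r < s" "w = rotate r w0" using rot_surj[OF s] by blast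
      then show "w \<in> (\<lambda>(w,r). rotate r w) ` (Gd s k \<times> {0..<s})" by force
    qed
  qed
  also have "\<dots> \<le> card (Gd s k \<times> {0..<s})" by (rule card_image_le) (simp add: finite_Gd)
  finally have "card (Wd s k) \<le> card (Gd s k) * s"
    by (simp add: card_cartesian_product)
  then have c2: "real (card (Wd s k)) \<le> real s * real (card (Gd s k))"
    by (metis mult.commute of_nat_le_iff of_nat_mult)
  have "real s * real (card BG) \<le> e * (real s * real (card (Gd s k)))"
    using c1 bad_Wd[OF s h, of k] c2 unfolding e_def
    by (meson exp_ge_zero mult_left_mono order_trans mult_nonneg_nonneg zero_le_numeral)
  then have "real s * real (card BG) \<le> real s * (e * real (card (Gd s k)))" by (simp add: algebra_simps)
  then have "real (card BG) \<le> e * real (card (Gd s k))" using s by simp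
  then show ?thesis unfolding BG_def e_def .
qed


definition letter :: "int \<Rightarrow> int \<Rightarrow> int" where
  "letter d1 d2 = (if d1 = 1 \<and> d2 = 1 then 1 else if d1 = -1 \<and> d2 = -1 then -1 else if d1 = -1 then 2 else 0)"
definition dec1 :: "int \<Rightarrow> int" where "dec1 l = (if l = 1 \<or> l = 0 then 1 else -1)"
definition dec2 :: "int \<Rightarrow> int" where "dec2 l = 2 * val l - dec1 l"

definition enc :: "nat \<Rightarrow> (nat \<Rightarrow> int) \<Rightarrow> int list" where
  "enc s x = map (\<lambda>i. letter (x (2 * i) - x (2 * i-1)) (x (2 * i+1) - x (2 * i))) [1..<s] @ [-1]"

lemma pm1: "d = 1 \<or> d = -1 \<Longrightarrow> d \<in> {1, -1::int}" by auto

lemma letter_props: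
  assumes "d1 = 1 \<or> d1 = -1" "d2 = 1 \<or> d2 = -1"
  shows "2 * val (letter d1 d2) = d1 + d2" "dec1 (letter d1 d2) = d1"
    "letter d1 d2 \<in> Lset" "letter d1 d2 \<in> {1,2} \<longleftrightarrow> d2 = 1"
  using assms by (auto simp: letter_def val_def dec1_def Lset_def)

lemma letter_dec: "l \<in> Lset \<Longrightarrow> letter (dec1 l) (dec2 l) = l"
  by (auto simp: letter_def val_def dec1_def dec2_def Lset_def)

lemma dec_pm: "l \<in> Lset \<Longrightarrow> (dec1 l = 1 \<or> dec1 l = -1) \<and> (dec2 l = 1 \<or> dec2 l = -1)"
  by (auto simp: val_def dec1_def dec2_def Lset_def)

lemma len_enc[simp]: "s \<ge> 1 \<Longrightarrow> length (enc s x) = s"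
  by (simp add: enc_def)

lemma enc_nth:
  "i < s - 1 \<Longrightarrow> enc s x ! i = letter (x (2 * (i+1)) - x (2 * (i+1)-1)) (x (2 * (i+1)+1) - x (2 * (i+1)))"
  "s \<ge> 1 \<Longrightarrow> enc s x ! (s - 1) = -1"
  by (auto simp: enc_def nth_append)

lemma count_map_upt: "count (mset (map f [a..<n])) y = card {i \<in> {a..<n}. f i = y}"
proof (induction n)
  case 0 then show ?case by simp
next
  case (Suc n)
  show ?case
  proof (cases "a \<le> n")
    case True
    have "{i \<in> {a..<Suc n}. f i = y} = (if f n = y then insert n {i \<in> {a..<n}. f i = y} else {i \<in> {a..<n}. f i = y})"
      using True by (auto simp: less_Suc_eq)
    then show ?thesis using Suc True by auto
  next
    case False
    then have "{i \<in> {a..<Suc n}. f i = y} = {}" by auto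
    then show ?thesis using False by simp
  qed
qed

context
  fixes s :: nat and x :: "nat \<Rightarrow> int"
  assumes dp: "dyck_path s x" and s1: "s \<ge> 1"
begin

lemma dp_step: assumes "1 \<le> t" "t \<le> 2 * s" shows "x t - x (t-1) = 1 \<or> x t - x (t-1) = -1"
  using dp assms by (auto simp: dyck_path_def)

lemma dp_nonneg: "t \<le> 2 * s \<Longrightarrow> x t \<ge> 0"
  using dp by (auto simp: dyck_path_def)

lemma dp_0: "x 0 = 0" "x (2 * s) = 0" "t > 2 * s \<Longrightarrow> x t = 0"
  using dp by (auto simp: dyck_path_def)

lemma dp_1: "x 1 = 1"
  using dp_step[of 1] dp_nonneg[of 1] dp_0 s1 by auto

lemma dp_last: "x (2 * s-1) = 1"
  using dp_step[of "2 * s"] dp_nonneg[of "2 * s-1"] dp_0 s1 by auto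

lemma enc_ps: "t \<le> s - 1 \<Longrightarrow> 2 * ps (enc s x) t + 1 = x (2 * t+1)"
proof (induction t)
  case 0 then show ?case using dp_1 by simp
next
  case (Suc t)
  have tl: "t < length (enc s x)" using Suc.prems s1 by simp
  have e: "enc s x ! t = letter (x (2 * (t+1)) - x (2 * (t+1)-1)) (x (2 * (t+1)+1) - x (2 * (t+1)))"
    using Suc.prems by (intro enc_nth) auto
  have d1: "x (2 * (t+1)) - x (2 * (t+1)-1) = 1 \<or> x (2 * (t+1)) - x (2 * (t+1)-1) = -1"
    using Suc.prems by (intro dp_step) auto
  have d2': "x (2 * (t+1)+1) - x (2 * (t+1)+1-1) = 1 \<or> x (2 * (t+1)+1) - x (2 * (t+1)+1-1) = -1"
    using Suc.prems by (intro dp_step) auto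
  then have d2: "x (2 * (t+1)+1) - x (2 * (t+1)) = 1 \<or> x (2 * (t+1)+1) - x (2 * (t+1)) = -1" by simp
  have "2 * ps (enc s x) (Suc t) + 1 = 2 * ps (enc s x) t + 1 + 2 * val (enc s x ! t)"
    using ps_Suc[OF tl] by simp
  also have "\<dots> = x (2 * t+1) + (x (2 * (t+1)) - x (2 * (t+1)-1)) + (x (2 * (t+1)+1) - x (2 * (t+1)))"
    using Suc letter_props(1)[OF d1 d2] e by simp
  also have "\<dots> = x (2 * Suc t + 1)"
    by (simp add: numeral_2_eq_2)
  finally show ?case .
qed

lemma enc_set: "set (enc s x) \<subseteq> Lset"
proof
  fix l assume "l \<in> set (enc s x)"
  then obtain i where i: "i < s" "l = enc s x ! i" using s1 by (metis in_set_conv_nth len_enc)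
  show "l \<in> Lset"
  proof (cases "i = s - 1")
    case True then show ?thesis using i s1 enc_nth(2) by (simp add: Lset_def)
  next
    case False
    then have "i < s - 1" using i by simp
    moreover have "x (2 * (i+1)) - x (2 * (i+1)-1) = 1 \<or> x (2 * (i+1)) - x (2 * (i+1)-1) = -1"
      using \<open>i < s - 1\<close> by (intro dp_step) auto
    moreover have "x (2 * (i+1)+1) - x (2 * (i+1)+1-1) = 1 \<or> x (2 * (i+1)+1) - x (2 * (i+1)+1-1) = -1"
      using \<open>i < s - 1\<close> by (intro dp_step) auto
    ultimately show ?thesis using i enc_nth(1) letter_props(3) by simp
  qed
qed

lemma enc_ps_s: "ps (enc s x) s = -1"
proof -
  have "s - 1 < length (enc s x)" using s1 by simp
  then have "ps (enc s x) (Suc (s-1)) = ps (enc s x) (s-1) + val (enc s x ! (s-1))" by (rule ps_Suc)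
  moreover have "2 * ps (enc s x) (s-1) + 1 = x (2 * (s-1)+1)" by (rule enc_ps) simp
  moreover have "2 * (s-1)+1 = 2 * s-1" using s1 by simp
  ultimately show ?thesis using dp_last enc_nth(2)[OF s1] s1 by (simp add: val_def)
qed

lemma odd_ups_enc: "odd_ups s x = count (mset (enc s x)) 1 + count (mset (enc s x)) 2 + 1"
proof -
  define f where "f = (\<lambda>i. letter (x (2 * i) - x (2 * i - 1)) (x (2 * i + 1) - x (2 * i)))"
  define U where "U = {i \<in> {1..<s}. x (2 * i + 1) - x (2 * i) = 1}"
  have pm: "\<And>i. i \<in> {1..<s} \<Longrightarrow> (x (2 * i) - x (2 * i - 1) = 1 \<or> x (2 * i) - x (2 * i - 1) = -1)
       \<and> (x (2 * i + 1) - x (2 * i) = 1 \<or> x (2 * i + 1) - x (2 * i) = -1)"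
  proof -
    fix i assume i: "i \<in> {1..<s}"
    have a: "x (2 * i) - x (2 * i - 1) = 1 \<or> x (2 * i) - x (2 * i - 1) = -1" using i by (intro dp_step) auto
    have "x (2 * i + 1) - x (2 * i + 1 - 1) = 1 \<or> x (2 * i + 1) - x (2 * i + 1 - 1) = -1" using i by (intro dp_step) auto
    then show "?thesis i" using a by simp
  qed
  have me: "mset (enc s x) = mset (map f [1..<s]) + {#-1#}" by (simp add: enc_def f_def)
  have "count (mset (enc s x)) 1 + count (mset (enc s x)) 2 = card {i \<in> {1..<s}. f i = 1} + card {i \<in> {1..<s}. f i = 2}"
  proof -
    have "count (mset (enc s x)) 1 = count (mset (map f [1..<s])) 1"
         "count (mset (enc s x)) 2 = count (mset (map f [1..<s])) 2" by (simp_all add: me)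
    then show ?thesis unfolding count_map_upt by simp
  qed
  also have "\<dots> = card ({i \<in> {1..<s}. f i = 1} \<union> {i \<in> {1..<s}. f i = 2})"
    by (rule card_Un_disjoint[symmetric]) auto
  also have "{i \<in> {1..<s}. f i = 1} \<union> {i \<in> {1..<s}. f i = 2} = U"
    using pm letter_props(4) unfolding U_def f_def by auto
  finally have c: "count (mset (enc s x)) 1 + count (mset (enc s x)) 2 = card U" .
  have S: "{t \<in> {1..2 * s}. odd t \<and> x t - x (t - 1) = 1} = insert 1 ((\<lambda>i. 2 * i + 1) ` U)"
  proof (rule set_eqI, rule iffI)
    fix t assume t: "t \<in> {t \<in> {1..2 * s}. odd t \<and> x t - x (t - 1) = 1}"
    show "t \<in> insert 1 ((\<lambda>i. 2 * i + 1) ` U)"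
    proof (cases "t = 1")
      case False
      then have "t = 2 * (t div 2) + 1" "t div 2 \<in> {1..<s}" using t by auto presburger+
      then show ?thesis using t unfolding U_def by (metis (mono_tags, lifting) add_diff_cancel_right' image_eqI insertI2 mem_Collect_eq)
    qed simp
  next
    fix t assume "t \<in> insert 1 ((\<lambda>i. 2 * i + 1) ` U)"
    then show "t \<in> {t \<in> {1..2 * s}. odd t \<and> x t - x (t - 1) = 1}"
      using dp_1 dp_0 s1 unfolding U_def by auto
  qed
  have "odd_ups s x = card (insert 1 ((\<lambda>i. 2 * i + 1) ` U))" unfolding odd_ups_def S ..
  also have "\<dots> = card U + 1"
  proof -
    have "1 \<notin> (\<lambda>i. 2 * i + 1) ` U" unfolding U_def by auto
    moreover have "card ((\<lambda>i. 2 * i + 1) ` U) = card U" by (rule card_image) (auto simp: inj_on_def)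
    moreover have "finite U" unfolding U_def by simp
    ultimately show ?thesis by simp
  qed
  finally show ?thesis using c by simp
qed

lemma enc_good: assumes "t < s" shows "ps (enc s x) t \<ge> 0"
proof -
  have "2 * ps (enc s x) t + 1 = x (2 * t + 1)" using assms by (intro enc_ps) simp
  moreover have "x (2 * t + 1) \<ge> 0" using assms by (intro dp_nonneg) simp
  ultimately show ?thesis by linarith
qed

lemma x_le: "t \<le> 2 * s \<Longrightarrow> x t \<le> int t"
proof (induction t)
  case 0 then show ?case using dp_0 by simp
next
  case (Suc t) then show ?case using dp_step[of "Suc t"] by auto
qed

lemma Max_ge0: "0 \<le> Max (x ` {0..2 * s})"
  using dp_0(1) by (metis Max_ge atLeastAtMost_iff finite_atLeastAtMost finite_imageI image_eqI le0)

lemma Max_le: "Max (x ` {0..2 * s}) \<le> 2 * int s"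
  using x_le by (subst Max_le_iff) force+

lemma Max_ps:
  assumes "Max (x ` {0..2 * s}) \<ge> 2 * m + 2" and m: "m \<ge> 0"
  shows "\<exists>t<s. ps (enc s x) t \<ge> m"
proof -
  have "Max (x ` {0..2 * s}) \<in> x ` {0..2 * s}" by (rule Max_in) auto
  then obtain t0 where "t0 \<in> {0..2 * s}" "x t0 = Max (x ` {0..2 * s})" by (metis imageE)
  then have t0: "t0 \<le> 2 * s" "x t0 \<ge> 2 * m + 2" using assms by auto
  have "t0 \<noteq> 0" proof assume "t0 = 0" then show False using t0(2) dp_0(1) m by simp qed
  have "t0 \<noteq> 2 * s" proof assume "t0 = 2 * s" then show False using t0(2) dp_0(2) m by simp qed
  then have t0': "1 \<le> t0" "t0 < 2 * s" using t0 \<open>t0 \<noteq> 0\<close> by auto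
  obtain t1 where t1: "odd t1" "t1 < 2 * s" "x t1 \<ge> 2 * m + 1"
  proof (cases "odd t0")
    case True then show ?thesis using that t0 t0' by auto
  next
    case False
    have "x t0 - x (t0 - 1) = 1 \<or> x t0 - x (t0 - 1) = -1" using t0' by (intro dp_step) auto
    moreover have "odd (t0 - 1)" using False t0' by simp
    ultimately show ?thesis using that[of "t0 - 1"] t0 t0' by auto
  qed
  define i where "i = t1 div 2"
  have "t1 = 2 * i + 1" using t1 i_def by simp
  then have "i < s" "2 * ps (enc s x) i + 1 \<ge> 2 * m + 1" using t1 enc_ps[of i] by auto
  then show ?thesis by (intro exI[of _ i]) auto
qed

end

lemma enc_Gd:
  assumes x: "x \<in> dyck_X s k" and s1: "s \<ge> 1"
  shows "enc s x \<in> Gd s k"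
proof -
  have dp: "dyck_path s x" and k: "odd_ups s x = k" using x by (auto simp: dyck_X_def)
  have L: "set (enc s x) \<subseteq> Lset" by (rule enc_set[OF dp s1])
  have "ps (enc s x) s = sum_list (map val (enc s x))" using s1 by (simp add: ps_def)
  then have "int (count (mset (enc s x)) 1) - int (count (mset (enc s x)) (-1)) = -1"
    using enc_ps_s[OF dp s1] sum_val_count[OF L] by simp
  then have c: "count (mset (enc s x)) (-1) = count (mset (enc s x)) 1 + 1" by linarith
  show ?thesis unfolding Gd_def Wd_def good_def
    using L c s1 odd_ups_enc[OF dp s1] k enc_good[OF dp s1] by auto
qed

lemma enc_inj:
  assumes s1: "s \<ge> 1" shows "inj_on (enc s) (dyck_X s k)"
proof (rule inj_onI)
  fix x y assume x: "x \<in> dyck_X s k" and y: "y \<in> dyck_X s k" and e: "enc s x = enc s y"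
  have dx: "dyck_path s x" and dy: "dyck_path s y" using x y by (auto simp: dyck_X_def)
  have odd_eq: "\<And>i. i \<le> s - 1 \<Longrightarrow> x (2 * i + 1) = y (2 * i + 1)"
    using enc_ps[OF dx s1] enc_ps[OF dy s1] e by metis
  show "x = y"
  proof
    fix t
    show "x t = y t"
    proof (cases "t = 0 \<or> t \<ge> 2 * s")
      case True then show ?thesis using dp_0[OF dx s1] dp_0[OF dy s1]
        by (metis le_neq_implies_less)
    next
      case False
      then have t: "1 \<le> t" "t < 2 * s" by auto
      show ?thesis
      proof (cases "odd t")
        case True
        then have "t = 2 * (t div 2) + 1" by simp
        moreover have "t div 2 \<le> s - 1" using t by auto
        ultimately show ?thesis using odd_eq by metis
      next
        case False
        define i where "i = t div 2"
        have ti: "t = 2 * i" "1 \<le> i" "i < s" using False t i_def by auto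
        have im: "i - 1 < s - 1" using ti by auto
        have "2 * (i - 1 + 1) = t" "2 * (i - 1 + 1) - 1 = 2 * (i - 1) + 1" using ti by auto
        then have ex: "enc s x ! (i-1) = letter (x t - x (2 * (i - 1) + 1)) (x (t+1) - x t)"
          and ey: "enc s y ! (i-1) = letter (y t - y (2 * (i - 1) + 1)) (y (t+1) - y t)"
          using enc_nth(1)[OF im, of x] enc_nth(1)[OF im, of y] by auto
        have d1x: "x t - x (2 * (i - 1) + 1) = 1 \<or> x t - x (2 * (i - 1) + 1) = -1"
          using dp_step[OF dx s1, of t] t \<open>2 * (i - 1 + 1) - 1 = 2 * (i - 1) + 1\<close> ti by auto
        have d2x: "x (t+1) - x t = 1 \<or> x (t+1) - x t = -1"
          using dp_step[OF dx s1, of "t+1"] t by auto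
        have d1y: "y t - y (2 * (i - 1) + 1) = 1 \<or> y t - y (2 * (i - 1) + 1) = -1"
          using dp_step[OF dy s1, of t] t \<open>2 * (i - 1 + 1) - 1 = 2 * (i - 1) + 1\<close> ti by auto
        have d2y: "y (t+1) - y t = 1 \<or> y (t+1) - y t = -1"
          using dp_step[OF dy s1, of "t+1"] t by auto
        have "x t - x (2 * (i - 1) + 1) = y t - y (2 * (i - 1) + 1)"
          using letter_props(2)[OF d1x d2x] letter_props(2)[OF d1y d2y] ex ey e by metis
        moreover have "x (2 * (i - 1) + 1) = y (2 * (i - 1) + 1)" using odd_eq ti by auto
        ultimately show ?thesis by simp
      qed
    qed
  qed
qed


definition dec :: "nat \<Rightarrow> int list \<Rightarrow> nat \<Rightarrow> int" where
  "dec s w t = (if t = 0 \<or> 2 * s \<le> t then 0 else if odd t then 2 * ps w (t div 2) + 1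
     else 2 * ps w (t div 2 - 1) + 1 + dec1 (w ! (t div 2 - 1)))"

context
  fixes s k :: nat and w :: "int list"
  assumes wG: "w \<in> Gd s k" and s1: "s \<ge> 1"
begin

lemma w_len: "length w = s" using wG by (simp add: Gd_def Wd_def)
lemma w_L: "set w \<subseteq> Lset" using wG by (simp add: Gd_def Wd_def)
lemma w_good: "t < s \<Longrightarrow> ps w t \<ge> 0" using wG w_len by (simp add: Gd_def good_def)
lemma w_ps_s: "ps w s = -1" using wG Wd_ps by (auto simp: Gd_def)
lemma w_nthL: "i < s \<Longrightarrow> w ! i \<in> Lset" using w_L w_len by (metis nth_mem subsetD)

lemma w_rec: "1 \<le> i \<Longrightarrow> i \<le> s \<Longrightarrow> ps w i = ps w (i - 1) + val (w ! (i - 1))"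
  using ps_Suc[of "i - 1" w] w_len by simp

lemma w_last: "ps w (s - 1) = 0" "w ! (s - 1) = -1"
proof -
  have r: "-1 = ps w (s - 1) + val (w ! (s - 1))" using w_rec[of s] s1 w_ps_s by simp
  have "ps w (s - 1) \<ge> 0" using w_good s1 by simp
  moreover have "\<bar>val (w ! (s - 1))\<bar> \<le> 1" using val_bound w_nthL s1 by simp
  ultimately show p: "ps w (s - 1) = 0" using r by linarith
  then have "val (w ! (s - 1)) = -1" using r by simp
  then show "w ! (s - 1) = -1" using w_nthL[of "s - 1"] s1 by (auto simp: val_def Lset_def)
qed

abbreviation "xx \<equiv> dec s w"

lemma xo: "i < s \<Longrightarrow> xx (2 * i + 1) = 2 * ps w i + 1"
  by (simp add: dec_def)

lemma xe: "1 \<le> i \<Longrightarrow> i < s \<Longrightarrow> xx (2 * i) = 2 * ps w (i - 1) + 1 + dec1 (w ! (i - 1))"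
  by (simp add: dec_def)

lemma x_dp: "dyck_path s xx"
proof -
  have z: "xx 0 = 0" "xx (2 * s) = 0" "\<And>t. t > 2 * s \<Longrightarrow> xx t = 0" by (auto simp: dec_def)
  have nn: "\<And>t. t \<le> 2 * s \<Longrightarrow> xx t \<ge> 0"
  proof -
    fix t assume t: "t \<le> 2 * s"
    show "xx t \<ge> 0"
    proof (cases "t = 0 \<or> t = 2 * s")
      case True then show ?thesis using z by auto
    next
      case False
      define i where "i = t div 2"
      show ?thesis
      proof (cases "odd t")
        case True
        then have "t = 2 * i + 1" "i < s" using i_def t False by auto
        then show ?thesis using xo w_good by simp
      next
        case ev: False
        then have ti: "t = 2 * i" "1 \<le> i" "i < s" using i_def t False by auto
        have "(dec1 (w ! (i - 1)) = 1 \<or> dec1 (w ! (i - 1)) = -1)" using dec_pm w_nthL ti by simp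
        then show ?thesis using ti xe w_good[of "i - 1"] by auto
      qed
    qed
  qed
  have st: "\<And>t. t \<in> {1..2 * s} \<Longrightarrow> xx t - xx (t - 1) = 1 \<or> xx t - xx (t - 1) = -1"
  proof -
    fix t assume t: "t \<in> {1..2 * s}"
    show "xx t - xx (t - 1) = 1 \<or> xx t - xx (t - 1) = -1"
    proof (cases "t = 2 * s")
      case True
      have "t - 1 = 2 * (s - 1) + 1" using True s1 by simp
      then show ?thesis using True z xo[of "s - 1"] w_last s1 by simp
    next
      case False
      define i where "i = t div 2"
      show ?thesis
      proof (cases "odd t")
        case True
        then have ti: "t = 2 * i + 1" "i < s" using i_def t False by auto
        show ?thesis
        proof (cases "i = 0")
          case True then show ?thesis using ti z xo[of 0] s1 by simp
        next
          case False
          have l: "w ! (i - 1) \<in> Lset" using w_nthL ti by simp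
          have "xx t - xx (t - 1) = 2 * ps w i + 1 - (2 * ps w (i - 1) + 1 + dec1 (w ! (i - 1)))"
            using ti False xo xe by simp
          also have "\<dots> = dec2 (w ! (i - 1))" using w_rec[of i] ti False by (simp add: dec2_def)
          finally show ?thesis using dec_pm[OF l] by simp
        qed
      next
        case ev: False
        then have ti: "t = 2 * i" "1 \<le> i" "i < s" using i_def t False by auto
        have l: "w ! (i - 1) \<in> Lset" using w_nthL ti by simp
        have "t - 1 = 2 * (i - 1) + 1" using ti by simp
        then have "xx t - xx (t - 1) = dec1 (w ! (i - 1))" using ti xo[of "i - 1"] xe by simp
        then show ?thesis using dec_pm[OF l] by simp
      qed
    qed
  qed
  show ?thesis unfolding dyck_path_def using z nn st by auto
qed

lemma enc_dec: "enc s xx = w"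
proof (rule nth_equalityI)
  show "length (enc s xx) = length w" using s1 w_len by simp
  fix i assume "i < length (enc s xx)"
  then have i: "i < s" using s1 by simp
  show "enc s xx ! i = w ! i"
  proof (cases "i = s - 1")
    case True then show ?thesis using enc_nth(2)[OF s1] w_last by simp
  next
    case False
    then have i': "i < s - 1" using i by simp
    have l: "w ! i \<in> Lset" using w_nthL i by simp
    have a: "xx (2 * (i + 1)) - xx (2 * (i + 1) - 1) = dec1 (w ! i)"
    proof -
      have "2 * (i + 1) - 1 = 2 * i + 1" by simp
      then show ?thesis using xe[of "i + 1"] xo[of i] i' by simp
    qed
    have b: "xx (2 * (i + 1) + 1) - xx (2 * (i + 1)) = dec2 (w ! i)"
      using xe[of "i + 1"] xo[of "i + 1"] i' w_rec[of "i + 1"] by (simp add: dec2_def)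
    show ?thesis using enc_nth(1)[OF i'] a b letter_dec[OF l] by simp
  qed
qed

lemma dec_X: "xx \<in> dyck_X s k"
proof -
  have "odd_ups s xx = count (mset (enc s xx)) 1 + count (mset (enc s xx)) 2 + 1"
    by (rule odd_ups_enc[OF x_dp s1])
  then have "odd_ups s xx = k" using enc_dec wG by (simp add: Gd_def Wd_def)
  then show ?thesis using x_dp by (simp add: dyck_X_def)
qed

end

lemma enc_bij: "s \<ge> 1 \<Longrightarrow> bij_betw (enc s) (dyck_X s k) (Gd s k)"
  unfolding bij_betw_def
proof (intro conjI enc_inj)
  assume s1: "s \<ge> 1"
  show "enc s ` dyck_X s k = Gd s k"
  proof
    show "enc s ` dyck_X s k \<subseteq> Gd s k" using enc_Gd s1 by auto
    show "Gd s k \<subseteq> enc s ` dyck_X s k"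
    proof
      fix w assume w: "w \<in> Gd s k"
      then have "enc s (dec s w) = w" "dec s w \<in> dyck_X s k" using enc_dec dec_X s1 by auto
      then show "w \<in> enc s ` dyck_X s k" by (metis image_eqI)
    qed
  qed
qed


lemma tail_X:
  assumes s1: "s \<ge> 1" and h: "h \<ge> 1"
  shows "real (card {x \<in> dyck_X s k. Max (x ` {0..2 * s}) \<ge> 4 * int h + 2})
     \<le> 2 * exp (- (real (h-1) * (real (h-1) - 1)) / real s) * real (card (dyck_X s k))"
proof -
  have bij: "bij_betw (enc s) (dyck_X s k) (Gd s k)" by (rule enc_bij[OF s1])
  have "card {x \<in> dyck_X s k. Max (x ` {0..2 * s}) \<ge> 4 * int h + 2}
      \<le> card {w \<in> Gd s k. \<exists>t<s. ps w t \<ge> 2 * int h}"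
  proof (rule card_inj_on_le)
    show "inj_on (enc s) {x \<in> dyck_X s k. Max (x ` {0..2 * s}) \<ge> 4 * int h + 2}"
      using bij unfolding bij_betw_def by (rule inj_on_subset[OF conjunct1]) auto
    show "enc s ` {x \<in> dyck_X s k. Max (x ` {0..2 * s}) \<ge> 4 * int h + 2} \<subseteq> {w \<in> Gd s k. \<exists>t<s. ps w t \<ge> 2 * int h}"
    proof clarify
      fix x assume x: "x \<in> dyck_X s k" "Max (x ` {0..2 * s}) \<ge> 4 * int h + 2"
      have dp: "dyck_path s x" using x by (simp add: dyck_X_def)
      have "\<exists>t<s. ps (enc s x) t \<ge> 2 * int h"
        using Max_ps[OF dp s1, of "2 * int h"] x by simp
      then show "enc s x \<in> Gd s k \<and> (\<exists>t<s. 2 * int h \<le> ps (enc s x) t)" using enc_Gd[OF x(1) s1] by simp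
    qed
    show "finite {w \<in> Gd s k. \<exists>t<s. ps w t \<ge> 2 * int h}" using finite_Gd by simp
  qed
  then have "real (card {x \<in> dyck_X s k. Max (x ` {0..2 * s}) \<ge> 4 * int h + 2})
      \<le> real (card {w \<in> Gd s k. \<exists>t<s. ps w t \<ge> 2 * int h})" by simp
  also have "\<dots> \<le> 2 * exp (- (real (h-1) * (real (h-1) - 1)) / real s) * real (card (Gd s k))"
    by (rule bad_Gd[OF s1 h])
  also have "card (Gd s k) = card (dyck_X s k)" using bij_betw_same_card[OF bij] by simp
  finally show ?thesis .
qed

lemma X_nonempty:
  assumes s1: "s \<ge> 1" and k: "1 \<le> k" "k \<le> s"
  shows "dyck_X s k \<noteq> {}"
proof -
  define w where "w = replicate (k-1) (2::int) @ replicate (s-k) 0 @ [-1]"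
  have len: "length w = s" using k by (simp add: w_def)
  have "w \<in> Gd s k"
  proof -
    have "set w \<subseteq> Lset" by (auto simp: w_def Lset_def)
    moreover have "count (mset w) (-1) = count (mset w) 1 + 1" "count (mset w) 1 + count (mset w) 2 + 1 = k"
      using k by (auto simp: w_def)
    moreover have "good w"
      unfolding good_def
    proof (intro allI impI)
      fix t assume "t < length w"
      then have "take t w = take t (replicate (k-1) (2::int) @ replicate (s-k) 0)" using len k
        by (simp add: w_def)
      moreover have "\<forall>l \<in> set (take t (replicate (k-1) (2::int) @ replicate (s-k) 0)). val l = 0"
        by (auto simp: val_def dest: in_set_takeD)
      ultimately have "ps w t = 0" unfolding ps_def
        by (metis (no_types, lifting) map_eq_conv map_replicate_const sum_list_replicate mult_zero_right length_map)
      then show "0 \<le> ps w t" by simp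
    qed
    ultimately show ?thesis using len by (simp add: Gd_def Wd_def)
  qed
  then have "enc s ` dyck_X s k \<noteq> {}" using enc_bij[OF s1, of k] unfolding bij_betw_def by blast
  then show ?thesis by simp
qed

lemma finite_X: "s \<ge> 1 \<Longrightarrow> finite (dyck_X s k)"
  using bij_betw_finite[OF enc_bij[of s k]] finite_Gd by simp


lemma L_facts:
  assumes s1: "s \<ge> 1"
  shows "real (nat \<lceil>sqrt (real s)\<rceil>) \<ge> sqrt (real s)" "real (nat \<lceil>sqrt (real s)\<rceil>) \<le> 2 * sqrt (real s)"
    "nat \<lceil>sqrt (real s)\<rceil> \<ge> 1" "real (nat \<lceil>sqrt (real s)\<rceil>) \<le> 2 * real s"
    "real (nat \<lceil>sqrt (real s)\<rceil>) ^ 2 \<ge> real s" "sqrt (real s) \<ge> 1"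
proof -
  have sq1: "sqrt (real s) \<ge> 1" using s1 by simp
  have "sqrt (real s) \<le> sqrt (real s * real s)" using s1 by (intro real_sqrt_le_mono) simp
  then have sqs: "sqrt (real s) \<le> real s" by simp
  have e: "real (nat \<lceil>sqrt (real s)\<rceil>) = of_int \<lceil>sqrt (real s)\<rceil>" using sq1 by simp
  show a: "real (nat \<lceil>sqrt (real s)\<rceil>) \<ge> sqrt (real s)" unfolding e by linarith
  have b: "real (nat \<lceil>sqrt (real s)\<rceil>) \<le> sqrt (real s) + 1" unfolding e by linarith
  then show "real (nat \<lceil>sqrt (real s)\<rceil>) \<le> 2 * sqrt (real s)" using sq1 by linarith
  show "nat \<lceil>sqrt (real s)\<rceil> \<ge> 1" using a sq1 by linarith
  show "real (nat \<lceil>sqrt (real s)\<rceil>) \<le> 2 * real s" using b sq1 sqs by linarith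
  have "real (nat \<lceil>sqrt (real s)\<rceil>) ^ 2 \<ge> sqrt (real s) ^ 2"
    using a sq1 by (intro power_mono) auto
  then show "real (nat \<lceil>sqrt (real s)\<rceil>) ^ 2 \<ge> real s" by simp
  show "sqrt (real s) \<ge> 1" by (rule sq1)
qed

lemma block_card:
  assumes s1: "s \<ge> 1"
  defines "L \<equiv> nat \<lceil>sqrt (real s)\<rceil>"
  shows "real (card {x \<in> dyck_X s k. Max (x ` {0..2 * s}) \<ge> int (4 * L * n)})
     \<le> 2 * exp (12 * real n - real n ^ 2) * real (card (dyck_X s k))"
proof -
  note LF = L_facts[OF s1, folded L_def]
  have finX: "finite (dyck_X s k)" by (rule finite_X[OF s1])
  show ?thesis
  proof (cases "n * L \<le> 1")
    case True
    have n1: "n \<le> 1" using True LF(3) by (metis le_trans mult_le_mono2 mult.commute nat_mult_1)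
    have "real (card {x \<in> dyck_X s k. Max (x ` {0..2 * s}) \<ge> int (4 * L * n)}) \<le> real (card (dyck_X s k))"
      using finX by (simp add: card_mono)
    also have "\<dots> \<le> 2 * exp (12 * real n - real n ^ 2) * real (card (dyck_X s k))"
    proof -
      have "12 * real n - real n ^ 2 \<ge> 0" using n1 by (cases n) auto
      then have "1 \<le> exp (12 * real n - real n ^ 2)" by simp
      then have "1 \<le> 2 * exp (12 * real n - real n ^ 2)" by linarith
      from mult_right_mono[OF this, of "real (card (dyck_X s k))"] show ?thesis by simp
    qed
    finally show ?thesis .
  next
    case False
    define h where "h = n * L - 1"
    have h1: "h \<ge> 1" using False h_def by simp
    have sub: "{x \<in> dyck_X s k. Max (x ` {0..2 * s}) \<ge> int (4 * L * n)}
        \<subseteq> {x \<in> dyck_X s k. Max (x ` {0..2 * s}) \<ge> 4 * int h + 2}"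
    proof -
      have n1: "n \<ge> 1" using False by (cases n) auto
      have "int h = int (n * L) - 1" using False n1 LF(3) unfolding h_def by (subst of_nat_diff) auto
      then have "4 * int h + 2 \<le> int (4 * L * n)" by (simp add: algebra_simps)
      then show ?thesis by auto
    qed
    have "real (card {x \<in> dyck_X s k. Max (x ` {0..2 * s}) \<ge> int (4 * L * n)})
      \<le> real (card {x \<in> dyck_X s k. Max (x ` {0..2 * s}) \<ge> 4 * int h + 2})"
      using finX sub by (simp add: card_mono)
    also have "\<dots> \<le> 2 * exp (- (real (h-1) * (real (h-1) - 1)) / real s) * real (card (dyck_X s k))"
      by (rule tail_X[OF s1 h1])
    also have "\<dots> \<le> 2 * exp (12 * real n - real n ^ 2) * real (card (dyck_X s k))"
    proof -
      define N where "N = real n"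
      define Lr where "Lr = real L"
      define S where "S = real s"
      have Spos: "S > 0" using s1 S_def by simp
      have hr: "real (h - 1) = N * Lr - 2" using False h_def N_def Lr_def by (simp add: of_nat_diff)
      have N0: "N \<ge> 0" using N_def by simp
      have q1: "N^2 * S \<le> N^2 * Lr^2" using LF(5) N0 Lr_def S_def by (simp add: mult_left_mono)
      have "N * Lr \<le> N * (2 * S)" using LF(4) N0 Lr_def S_def by (intro mult_left_mono) auto
      then have q2: "5 * (N * Lr) \<le> 10 * (N * S)" by (simp add: algebra_simps)
      have q3: "N * S \<ge> 0" using N0 Spos by simp
      have ex: "(N * Lr - 2) * (N * Lr - 3) = N^2 * Lr^2 - 5 * (N * Lr) + 6"
        by (simp add: algebra_simps power2_eq_square)
      have "N^2 * S - 12 * (N * S) \<le> (N * Lr - 2) * (N * Lr - 3)"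
        unfolding ex using q1 q2 q3 by linarith
      then have "(12 * N - N^2) * S \<ge> - ((N * Lr - 2) * (N * Lr - 3))" by (simp add: algebra_simps)
      then have "- ((N * Lr - 2) * (N * Lr - 3)) / S \<le> 12 * N - N^2"
        by (rule pos_divide_le_eq[OF Spos, THEN iffD2])
      then have "- (real (h-1) * (real (h-1) - 1)) / real s \<le> 12 * real n - real n ^ 2"
        unfolding hr S_def N_def by (simp add: algebra_simps)
      then show ?thesis by (simp add: mult_right_mono)
    qed
    finally show ?thesis .
  qed
qed


lemma geo_bound: "(\<Sum>n\<le>N. exp (- real n)) \<le> (2::real)"
proof -
  define q where "q = exp (-1::real)"
  have "exp (1::real) \<ge> 2" using exp_ge_add_one_self[of "1::real"] by simp
  then have q2: "q \<le> 1/2" unfolding q_def by (simp add: exp_minus field_simps)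
  have q0: "q > 0" unfolding q_def by simp
  have e: "\<And>n. exp (- real n) = q ^ n" unfolding q_def by (simp add: exp_of_nat_mult[symmetric])
  have "(\<Sum>n\<le>N. exp (- real n)) = (\<Sum>n\<le>N. q ^ n)" by (simp add: e)
  also have "\<dots> = (1 - q ^ Suc N) / (1 - q)" using q2 by (simp add: sum_gp0)
  also have "\<dots> \<le> 1 / (1 - q)" using q2 q0 by (intro divide_right_mono) auto
  also have "\<dots> \<le> 2" using q2 by (simp add: field_simps)
  finally show ?thesis .
qed

lemma main_sum:
  assumes s1: "s \<ge> 1" and a: "a > 0"
  shows "(\<Sum>x\<in>dyck_X s k. exp (a * real_of_int (Max (x ` {0..2 * s})) / sqrt (real s)))
     \<le> 4 * exp (8 * a + (8 * a + 13)^2) * real (card (dyck_X s k))"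
proof -
  define L where "L = nat \<lceil>sqrt (real s)\<rceil>"
  note LF = L_facts[OF s1, folded L_def]
  define X where "X = dyck_X s k"
  define M where "M x = Max (x ` {0..2 * s})" for x :: "nat \<Rightarrow> int"
  define g where "g n = exp (a * real (4 * L * (n + 1)) / sqrt (real s))" for n :: nat
  define N where "N = 2 * s"
  have finX: "finite X" using finite_X[OF s1] X_def by simp
  have sqpos: "sqrt (real s) > 0" using s1 by simp
  have pt: "\<And>x. x \<in> X \<Longrightarrow> exp (a * real_of_int (M x) / sqrt (real s))
      \<le> (\<Sum>n\<le>N. if M x \<ge> int (4 * L * n) then g n else 0)"
  proof -
    fix x assume x: "x \<in> X"
    have dp: "dyck_path s x" using x X_def by (simp add: dyck_X_def)
    have M0: "0 \<le> M x" and M2: "M x \<le> 2 * int s" using Max_ge0[OF dp s1] Max_le[OF dp s1] M_def by auto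
    define n0 where "n0 = nat (M x) div (4 * L)"
    have L0: "4 * L > 0" using LF(3) by simp
    have "nat (M x) \<le> N" using M2 unfolding N_def by (simp add: nat_le_iff)
    moreover have "n0 \<le> nat (M x)" unfolding n0_def by (rule div_le_dividend)
    ultimately have n0N: "n0 \<le> N" by simp
    have lo: "4 * L * n0 \<le> nat (M x)" unfolding n0_def by (rule times_div_less_eq_dividend)
    have hi0: "nat (M x) < 4 * L + 4 * L * n0" unfolding n0_def by (rule dividend_less_times_div[OF L0])
    have hi: "nat (M x) < 4 * L * (n0 + 1)" using hi0 by (simp add: algebra_simps)
    have Mn: "int (nat (M x)) = M x" using M0 by simp
    have P0: "M x \<ge> int (4 * L * n0)" using lo Mn by (metis of_nat_le_iff)
    have "M x < int (4 * L * (n0 + 1))" using hi Mn by (metis of_nat_less_iff)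
    then have "real_of_int (M x) \<le> real (4 * L * (n0 + 1))"
      by (metis less_eq_real_def of_int_less_iff of_int_of_nat_eq)
    then have "a * real_of_int (M x) / sqrt (real s) \<le> a * real (4 * L * (n0 + 1)) / sqrt (real s)"
      using a sqpos by (intro divide_right_mono mult_left_mono) auto
    then have "exp (a * real_of_int (M x) / sqrt (real s)) \<le> g n0" unfolding g_def by simp
    also have "g n0 = (if M x \<ge> int (4 * L * n0) then g n0 else 0)" using P0 by simp
    also have "\<dots> \<le> (\<Sum>n\<le>N. if M x \<ge> int (4 * L * n) then g n else 0)"
      by (rule member_le_sum[where f = "\<lambda>n. if M x \<ge> int (4 * L * n) then g n else 0"])
         (use n0N in \<open>auto simp: g_def\<close>)
    finally show "exp (a * real_of_int (M x) / sqrt (real s)) \<le> (\<Sum>n\<le>N. if M x \<ge> int (4 * L * n) then g n else 0)" .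
  qed
  have "(\<Sum>x\<in>X. exp (a * real_of_int (M x) / sqrt (real s)))
      \<le> (\<Sum>x\<in>X. \<Sum>n\<le>N. if M x \<ge> int (4 * L * n) then g n else 0)"
    by (rule sum_mono) (rule pt)
  also have "\<dots> = (\<Sum>n\<le>N. \<Sum>x\<in>X. if M x \<ge> int (4 * L * n) then g n else 0)"
    by (rule sum.swap)
  also have "\<dots> = (\<Sum>n\<le>N. g n * real (card {x \<in> X. M x \<ge> int (4 * L * n)}))"
  proof (rule sum.cong[OF refl])
    fix n
    have "(\<Sum>x\<in>X. if M x \<ge> int (4 * L * n) then g n else 0) = (\<Sum>x\<in>{x \<in> X. M x \<ge> int (4 * L * n)}. g n)"
      by (rule sum.inter_filter[OF finX, symmetric])
    also have "\<dots> = g n * real (card {x \<in> X. M x \<ge> int (4 * L * n)})" by simp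
    finally show "(\<Sum>x\<in>X. if M x \<ge> int (4 * L * n) then g n else 0) = g n * real (card {x \<in> X. M x \<ge> int (4 * L * n)})" .
  qed
  also have "\<dots> \<le> (\<Sum>n\<le>N. (2 * exp (8 * a + (8 * a + 13)^2) * real (card X)) * exp (- real n))"
  proof (rule sum_mono)
    fix n assume "n \<in> {..N}"
    have gn: "g n \<le> exp (8 * a * (real n + 1))"
    proof -
      have "real (4 * L * (n + 1)) = 4 * real L * (real n + 1)" by (simp add: algebra_simps)
      also have "\<dots> \<le> 4 * (2 * sqrt (real s)) * (real n + 1)" using LF(2) by (intro mult_right_mono) auto
      finally have "a * real (4 * L * (n + 1)) \<le> a * (8 * sqrt (real s) * (real n + 1))"
        using a by (intro mult_left_mono) auto
      then have "a * real (4 * L * (n + 1)) / sqrt (real s) \<le> 8 * a * (real n + 1)"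
        using sqpos by (simp add: pos_divide_le_eq algebra_simps)
      then show ?thesis unfolding g_def by simp
    qed
    have g0: "g n \<ge> 0" unfolding g_def by simp
    have "g n * real (card {x \<in> X. M x \<ge> int (4 * L * n)}) \<le> g n * (2 * exp (12 * real n - real n ^ 2) * real (card X))"
      using block_card[OF s1, of k n] g0 unfolding X_def M_def L_def by (intro mult_left_mono) auto
    also have "\<dots> \<le> exp (8 * a * (real n + 1)) * (2 * exp (12 * real n - real n ^ 2) * real (card X))"
      using gn by (intro mult_right_mono) auto
    also have "\<dots> = 2 * exp (8 * a * (real n + 1) + (12 * real n - real n ^ 2)) * real (card X)"
      by (simp add: exp_add)
    also have "\<dots> \<le> 2 * exp (8 * a + (8 * a + 13)^2 - real n) * real (card X)"
    proof -
      have "(8 * a + 13) * real n - real n ^ 2 \<le> (8 * a + 13)^2"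
      proof -
        have "0 \<le> (2 * real n - (8 * a + 13))^2 + 3 * (8 * a + 13)^2" by simp
        then show ?thesis by (simp add: power2_eq_square algebra_simps)
      qed
      then have "8 * a * (real n + 1) + (12 * real n - real n ^ 2) \<le> 8 * a + (8 * a + 13)^2 - real n"
        by (simp add: algebra_simps)
      then show ?thesis by (intro mult_right_mono mult_left_mono) auto
    qed
    also have "\<dots> = (2 * exp (8 * a + (8 * a + 13)^2) * real (card X)) * exp (- real n)"
      by (simp add: exp_diff exp_minus field_simps)
    finally show "g n * real (card {x \<in> X. M x \<ge> int (4 * L * n)}) \<le> (2 * exp (8 * a + (8 * a + 13)^2) * real (card X)) * exp (- real n)" .
  qed
  also have "\<dots> = (2 * exp (8 * a + (8 * a + 13)^2) * real (card X)) * (\<Sum>n\<le>N. exp (- real n))"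
    by (simp add: sum_distrib_left)
  also have "\<dots> \<le> (2 * exp (8 * a + (8 * a + 13)^2) * real (card X)) * 2"
    by (intro mult_left_mono geo_bound) auto
  finally show ?thesis unfolding X_def M_def by simp
qed


theorem lemma3p1:
  fixes \<alpha> \<alpha>' a :: real
  assumes "0 < \<alpha>'" "\<alpha>' < \<alpha>" "\<alpha> < 1" "a > 0"
  shows "\<exists>b>0. \<forall>s::nat. s \<ge> 1 \<longrightarrow>
           (\<forall>k::nat. \<alpha>' * real s \<le> real k \<and> real k \<le> \<alpha> * real s \<longrightarrow>
              E_unif s k (\<lambda>x. exp (a * real_of_int (Max (x ` {0..2 * s})) / sqrt (real s))) \<le> b)"
proof -
  define b where "b = 4 * exp (8 * a + (8 * a + 13)^2)"
  have bpos: "b > 0" unfolding b_def by simp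
  show ?thesis
  proof (intro exI[of _ b] conjI allI impI bpos)
    fix s k :: nat
    assume s1: "s \<ge> 1" and kk: "\<alpha>' * real s \<le> real k \<and> real k \<le> \<alpha> * real s"
    have "real s > 0" using s1 by simp
    then have "\<alpha>' * real s > 0" using assms(1) by (rule mult_pos_pos[rotated])
    then have "real k > 0" using kk by linarith
    then have k1: "1 \<le> k" by simp
    have "\<alpha> * real s < real s" using assms(3) s1 by simp
    then have ks: "k \<le> s" using kk by linarith
    have ne: "dyck_X s k \<noteq> {}" by (rule X_nonempty[OF s1 k1 ks])
    have fin: "finite (dyck_X s k)" by (rule finite_X[OF s1])
    have cpos: "real (card (dyck_X s k)) > 0" using ne fin by (simp add: card_gt_0_iff)
    have "E_unif s k (\<lambda>x. exp (a * real_of_int (Max (x ` {0..2 * s})) / sqrt (real s)))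
        = (\<Sum>x\<in>dyck_X s k. exp (a * real_of_int (Max (x ` {0..2 * s})) / sqrt (real s))) / real (card (dyck_X s k))"
      unfolding E_unif_def by (rule integral_pmf_of_set[OF ne fin])
    also have "\<dots> \<le> b * real (card (dyck_X s k)) / real (card (dyck_X s k))"
      using main_sum[OF s1 assms(4), of k] cpos unfolding b_def by (intro divide_right_mono) auto
    also have "\<dots> = b" using cpos by simp
    finally show "E_unif s k (\<lambda>x. exp (a * real_of_int (Max (x ` {0..2 * s})) / sqrt (real s))) \<le> b" .
  qed
qed

end
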